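(* Let $X$ be a topological space equipped with a continuous binary operation $*:X\times X\to X$ and a point $e\in X$ such that $x*e=x=e*x$ and $x*x=x$ for all $x\in X$ (a topological idempotent unitary magma). Then the fundamental group $\pi_1(X,e)$ is trivial. *)

theory Defs
  imports "HOL-Analysis.Analysis"
begin

definition trivial_fundamental_group :: "'a topology \<Rightarrow> 'a \<Rightarrow> bool" where
  "trivial_fundamental_group X a \<longleftrightarrow>
     (\<forall>g. pathin X g \<and> g 0 = a \<and> g 1 = a \<longrightarrow>
        homotopic_with (\<lambda>h. h 0 = a \<and> h 1 = a) (top_of_set {0..1}) X g (\<lambda>t. a))"

end

theory Submission
  imports Defs
begin

lemma cm_comp:
  assumes "pathin X g" "continuous_on T \<phi>" "\<phi> \<in> T \<rightarrow> {0..1}"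
  shows "continuous_map (top_of_set T) X (\<lambda>x. g (\<phi> x))"
proof -
  have "continuous_map (top_of_set T) (top_of_set {0..1}) \<phi>" using assms by simp
  then show ?thesis using continuous_map_compose[of "top_of_set T" "top_of_set {0..1}" \<phi> X g] assms
    by (simp add: pathin_def o_def)
qed

theorem corollary2p1:
  fixes X :: "'a topology" and m :: "'a \<Rightarrow> 'a \<Rightarrow> 'a" and e :: 'a
  assumes cont: "continuous_map (prod_topology X X) X (\<lambda>(x, y). m x y)"
    and e_in: "e \<in> topspace X"
    and unit_r: "\<And>x. x \<in> topspace X \<Longrightarrow> m x e = x"
    and unit_l: "\<And>x. x \<in> topspace X \<Longrightarrow> m e x = x"
    and idem: "\<And>x. x \<in> topspace X \<Longrightarrow> m x x = x"
  shows "trivial_fundamental_group X e"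
  unfolding trivial_fundamental_group_def
proof (intro allI impI)
  fix g assume "pathin X g \<and> g 0 = e \<and> g 1 = e"
  hence pg: "pathin X g" and g0: "g 0 = e" and g1: "g 1 = e" by auto
  have gX: "g t \<in> topspace X" if "t \<in> {0..1}" for t
    using pg that by (auto simp: pathin_def continuous_map_def)
  define S :: "(real \<times> real) set" where "S = {0..1} \<times> {0..1}"
  define k where "k t = (if t \<le> 1/2 then g (2*t) else g (2 - 2*t))" for t
  define h1 where "h1 p = (if snd p \<le> fst p / 2 then g (2 * snd p)
      else if snd p \<le> 1 - fst p / 2 then m (g (snd p + fst p / 2)) (g (fst p)) else g (2 - 2 * snd p))"
    for p :: "real \<times> real"
  define h2 where "h2 p = (if snd p \<le> 1/2 then g (2 * snd p * (1 - fst p)) else g ((2 - 2 * snd p) * (1 - fst p)))"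
    for p :: "real \<times> real"
  let ?P = "\<lambda>h. h 0 = e \<and> h 1 = e"
  have c1: "continuous_map (top_of_set S) X h1"
  proof -
    have A: "continuous_map (top_of_set (S \<inter> {p. snd p \<le> fst p / 2})) X (\<lambda>p. g (2 * snd p))"
      by (rule cm_comp[OF pg]) (auto intro!: continuous_intros simp: S_def)
    have B: "continuous_map (top_of_set (S \<inter> {p. fst p / 2 \<le> snd p} \<inter> {p. snd p \<le> 1 - fst p / 2})) X
        (\<lambda>p. m (g (snd p + fst p / 2)) (g (fst p)))"
    proof -
      let ?T = "S \<inter> {p. fst p / 2 \<le> snd p} \<inter> {p. snd p \<le> 1 - fst p / 2}"
      have "continuous_map (top_of_set ?T) X (\<lambda>p. g (snd p + fst p / 2))"
        by (rule cm_comp[OF pg]) (auto intro!: continuous_intros simp: S_def)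
      moreover have "continuous_map (top_of_set ?T) X (\<lambda>p. g (fst p))"
        by (rule cm_comp[OF pg]) (auto intro!: continuous_intros simp: S_def)
      ultimately have "continuous_map (top_of_set ?T) (prod_topology X X) (\<lambda>p. (g (snd p + fst p / 2), g (fst p)))"
        by (rule continuous_map_pairedI)
      from continuous_map_compose[OF this cont] show ?thesis by (simp add: o_def)
    qed
    have C: "continuous_map (top_of_set (S \<inter> {p. fst p / 2 \<le> snd p} \<inter> {p. 1 - fst p / 2 \<le> snd p})) X
        (\<lambda>p. g (2 - 2 * snd p))"
      by (rule cm_comp[OF pg]) (auto intro!: continuous_intros simp: S_def)
    have BC: "continuous_map (top_of_set (S \<inter> {p. fst p / 2 \<le> snd p})) X
       (\<lambda>p. if snd p \<le> 1 - fst p / 2 then m (g (snd p + fst p / 2)) (g (fst p)) else g (2 - 2 * snd p))"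
    proof (rule continuous_map_cases_le)
      show "continuous_map (top_of_set (S \<inter> {p. fst p / 2 \<le> snd p})) euclideanreal snd"
        by (auto intro!: continuous_intros)
      show "continuous_map (top_of_set (S \<inter> {p. fst p / 2 \<le> snd p})) euclideanreal (\<lambda>p. 1 - fst p / 2)"
        by (auto intro!: continuous_intros)
      show "continuous_map (subtopology (top_of_set (S \<inter> {p. fst p / 2 \<le> snd p}))
          {x \<in> topspace (top_of_set (S \<inter> {p. fst p / 2 \<le> snd p})). snd x \<le> 1 - fst x / 2})
          X (\<lambda>p. m (g (snd p + fst p / 2)) (g (fst p)))"
        using B by (simp add: subtopology_subtopology Int_def conj_ac)
      show "continuous_map (subtopology (top_of_set (S \<inter> {p. fst p / 2 \<le> snd p}))
          {x \<in> topspace (top_of_set (S \<inter> {p. fst p / 2 \<le> snd p})). 1 - fst x / 2 \<le> snd x})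
          X (\<lambda>p. g (2 - 2 * snd p))"
        using C by (simp add: subtopology_subtopology Int_def conj_ac)
      fix p assume "p \<in> topspace (top_of_set (S \<inter> {p. fst p / 2 \<le> snd p}))" "snd p = 1 - fst p / 2"
      then show "m (g (snd p + fst p / 2)) (g (fst p)) = g (2 - 2 * snd p)"
        using unit_l gX g1 by (auto simp: S_def)
    qed
    have "continuous_map (top_of_set S) X (\<lambda>p. if snd p \<le> fst p / 2 then g (2 * snd p)
      else (if snd p \<le> 1 - fst p / 2 then m (g (snd p + fst p / 2)) (g (fst p)) else g (2 - 2 * snd p)))"
    proof (rule continuous_map_cases_le)
      show "continuous_map (top_of_set S) euclideanreal snd"
        by (auto intro!: continuous_intros)
      show "continuous_map (top_of_set S) euclideanreal (\<lambda>p. fst p / 2)"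
        by (auto intro!: continuous_intros)
      show "continuous_map (subtopology (top_of_set S) {x \<in> topspace (top_of_set S). snd x \<le> fst x / 2})
          X (\<lambda>p. g (2 * snd p))"
        using A by (simp add: subtopology_subtopology Int_def conj_ac)
      show "continuous_map (subtopology (top_of_set S) {x \<in> topspace (top_of_set S). fst x / 2 \<le> snd x})
          X (\<lambda>p. if snd p \<le> 1 - fst p / 2 then m (g (snd p + fst p / 2)) (g (fst p)) else g (2 - 2 * snd p))"
        using BC by (simp add: subtopology_subtopology Int_def conj_ac)
      fix p assume "p \<in> topspace (top_of_set S)" "snd p = fst p / 2"
      then show "g (2 * snd p) = (if snd p \<le> 1 - fst p / 2 then m (g (snd p + fst p / 2)) (g (fst p)) else g (2 - 2 * snd p))"
        using idem gX by (auto simp: S_def mult.commute)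
    qed
    then show ?thesis by (rule continuous_map_eq) (simp add: h1_def)
  qed
  have c2: "continuous_map (top_of_set S) X h2"
  proof -
    have "continuous_map (top_of_set S) X (\<lambda>p. if snd p \<le> 1/2 then g (2 * snd p * (1 - fst p)) else g ((2 - 2 * snd p) * (1 - fst p)))"
    proof (rule continuous_map_cases_le)
      show "continuous_map (top_of_set S) euclideanreal snd"
        by (auto intro!: continuous_intros)
      show "continuous_map (top_of_set S) euclideanreal (\<lambda>p. 1/2)"
        by (auto intro!: continuous_intros)
      show "continuous_map (subtopology (top_of_set S) {x \<in> topspace (top_of_set S). snd x \<le> 1/2})
          X (\<lambda>p. g (2 * snd p * (1 - fst p)))"
        apply (simp add: subtopology_subtopology)
        apply (rule cm_comp[OF pg])
         apply (auto intro!: continuous_intros simp: S_def)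
        by (smt (verit, best) mult_left_le mult_nonneg_nonneg)
      show "continuous_map (subtopology (top_of_set S) {x \<in> topspace (top_of_set S). 1/2 \<le> snd x})
          X (\<lambda>p. g ((2 - 2 * snd p) * (1 - fst p)))"
        apply (simp add: subtopology_subtopology)
        apply (rule cm_comp[OF pg])
         apply (auto intro!: continuous_intros simp: S_def)
        by (smt (verit, best) mult_left_le mult_nonneg_nonneg)
      fix p assume "p \<in> topspace (top_of_set S)" "snd p = 1/2"
      then have "2 * snd p = 2 - 2 * snd p" by simp
      then show "g (2 * snd p * (1 - fst p)) = g ((2 - 2 * snd p) * (1 - fst p))" by metis
    qed
    then show ?thesis by (rule continuous_map_eq) (simp add: h2_def)
  qed
  have ext: "\<And>h k. (\<And>x. x \<in> topspace (top_of_set {0..1::real}) \<Longrightarrow> h x = k x) \<Longrightarrow> (?P h \<longleftrightarrow> ?P k)"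
    by simp
  have "homotopic_with ?P (top_of_set {0..1}) X g k"
  proof (rule homotopic_with[where P="?P" and X="top_of_set {0..1}", THEN iffD2], simp, intro exI conjI)
    show "continuous_map (prod_topology (top_of_set {0..1}) (top_of_set {0..1})) X h1"
      using c1 by (simp add: S_def)
    show "\<forall>x\<in>topspace (top_of_set {0..1}). h1 (0, x) = g x"
      using unit_r gX by (auto simp: h1_def g0)
    show "\<forall>x\<in>topspace (top_of_set {0..1}). h1 (1, x) = k x"
      by (auto simp: h1_def k_def)
    show "\<forall>t\<in>{0..1}. ?P (\<lambda>x. h1 (t, x))"
      using unit_l unit_r e_in by (auto simp: h1_def g0 g1)
  qed
  moreover have "homotopic_with ?P (top_of_set {0..1}) X k (\<lambda>t. e)"
  proof (rule homotopic_with[where P="?P" and X="top_of_set {0..1}", THEN iffD2], simp, intro exI conjI)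
    show "continuous_map (prod_topology (top_of_set {0..1}) (top_of_set {0..1})) X h2"
      using c2 by (simp add: S_def)
    show "\<forall>x\<in>topspace (top_of_set {0..1}). h2 (0, x) = k x"
      by (auto simp: h2_def k_def)
    show "\<forall>x\<in>topspace (top_of_set {0..1}). h2 (1, x) = e"
      by (auto simp: h2_def g0)
    show "\<forall>t\<in>{0..1}. ?P (\<lambda>x. h2 (t, x))"
      by (auto simp: h2_def g0)
  qed
  ultimately show "homotopic_with ?P (top_of_set {0..1}) X g (\<lambda>t. e)"
    by (rule homotopic_with_trans)
qed

end
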